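(* Let $I$ be a ProbeTop-$k$ instance and let $(x,y)$ be a basic feasible solution of $\mathrm{LP}_{\mathtt{ptk}}(I)$. Then at most two components of $y=(y_i)_{i\in[n]}$ lie strictly between $0$ and $1$, and if exactly two components $y_{i_1},y_{i_2}$ are non-integral, then $y_{i_1}+y_{i_2}=1$.
   Context: $\mathrm{LP}_{\mathtt{ptk}}(I)$ for integers $1\le k\le T\le n$, values $r_1,\dots,r_J\ge 0$ and probabilities $q_{ij}\in[0,1]$ ($i\in[n],j\in[J]$, $\sum_j q_{ij}=1$) is the linear program in variables $x_{ij},y_i$: maximize $\sum_{i,j} r_j x_{ij}$ subject to $x_{ij}\le y_i q_{ij}$ for all $i,j$; $\sum_i y_i\le T$; $\sum_{i,j}x_{ij}\le k$; $x_{ij}\ge 0$; $0\le y_i\le 1$. *)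

theory Defs
  imports Main "HOL.Real"
begin

definition ptk_instance ::
  "nat \<Rightarrow> nat \<Rightarrow> nat \<Rightarrow> nat \<Rightarrow> (nat \<Rightarrow> real) \<Rightarrow> (nat \<Rightarrow> nat \<Rightarrow> real) \<Rightarrow> bool" where
  "ptk_instance n J T k r q \<longleftrightarrow>
     1 \<le> k \<and> k \<le> T \<and> T \<le> n \<and>
     (\<forall>j\<in>{1..J}. 0 \<le> r j) \<and>
     (\<forall>i\<in>{1..n}. \<forall>j\<in>{1..J}. 0 \<le> q i j \<and> q i j \<le> 1) \<and>
     (\<forall>i\<in>{1..n}. (\<Sum>j=1..J. q i j) = 1)"

text \<open>Feasible points of LP_ptk(I). A point is a pair of functions (x, y); entries
 outside the index ranges are fixed to 0, so that the point is exactly a vector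
 in R^(nJ + n).\<close>
definition ptk_feasible ::
  "nat \<Rightarrow> nat \<Rightarrow> nat \<Rightarrow> nat \<Rightarrow> (nat \<Rightarrow> nat \<Rightarrow> real)
     \<Rightarrow> (nat \<Rightarrow> nat \<Rightarrow> real) \<Rightarrow> (nat \<Rightarrow> real) \<Rightarrow> bool" where
  "ptk_feasible n J T k q x y \<longleftrightarrow>
     (\<forall>i j. (i \<notin> {1..n} \<or> j \<notin> {1..J}) \<longrightarrow> x i j = 0) \<and>
     (\<forall>i. i \<notin> {1..n} \<longrightarrow> y i = 0) \<and>
     (\<forall>i\<in>{1..n}. \<forall>j\<in>{1..J}. 0 \<le> x i j \<and> x i j \<le> y i * q i j) \<and>
     (\<forall>i\<in>{1..n}. 0 \<le> y i \<and> y i \<le> 1) \<and>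
     (\<Sum>i=1..n. y i) \<le> real T \<and>
     (\<Sum>i=1..n. \<Sum>j=1..J. x i j) \<le> real k"

text \<open>Basic feasible solution = vertex (extreme point) of the feasible polytope:
 feasible and not a proper convex combination of two distinct feasible points.\<close>
definition ptk_bfs ::
  "nat \<Rightarrow> nat \<Rightarrow> nat \<Rightarrow> nat \<Rightarrow> (nat \<Rightarrow> nat \<Rightarrow> real)
     \<Rightarrow> (nat \<Rightarrow> nat \<Rightarrow> real) \<Rightarrow> (nat \<Rightarrow> real) \<Rightarrow> bool" where
  "ptk_bfs n J T k q x y \<longleftrightarrow>
     ptk_feasible n J T k q x y \<and>
     \<not> (\<exists>x1 y1 x2 y2 (t::real).
          ptk_feasible n J T k q x1 y1 \<and> ptk_feasible n J T k q x2 y2 \<and>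
          (x1, y1) \<noteq> (x2, y2) \<and> 0 < t \<and> t < 1 \<and>
          (\<forall>i j. x i j = t * x1 i j + (1 - t) * x2 i j) \<and>
          (\<forall>i. y i = t * y1 i + (1 - t) * y2 i))"

end

theory Submission
  imports Defs
begin

lemma perturb_feasible:
  assumes feas: "ptk_feasible n J T k q x y"
    and supp: "\<forall>i. c i \<noteq> 0 \<longrightarrow> i\<in>{1..n} \<and> 0<y i \<and> y i<1"
    and bnd: "\<forall>i. c i \<noteq> 0 \<longrightarrow> \<bar>e * c i\<bar> \<le> y i \<and> \<bar>e * c i\<bar> \<le> 1 - y i"
    and sumx: "(\<Sum>i=1..n. c i * (\<Sum>j=1..J. x i j) / y i) = 0"
    and sumy: "(\<Sum>i=1..n. y i) + e * (\<Sum>i=1..n. c i) \<le> real T"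
  shows "ptk_feasible n J T k q (\<lambda>i j. x i j * (1 + e * c i / y i)) (\<lambda>i. y i + e * c i)"
proof -
  have x0: "\<forall>i j. (i \<notin> {1..n} \<or> j \<notin> {1..J}) \<longrightarrow> x i j = 0"
    and y0: "\<forall>i. i \<notin> {1..n} \<longrightarrow> y i = 0"
    and xb: "\<forall>i\<in>{1..n}. \<forall>j\<in>{1..J}. 0 \<le> x i j \<and> x i j \<le> y i * q i j"
    and yb: "\<forall>i\<in>{1..n}. 0 \<le> y i \<and> y i \<le> 1"
    and sy: "(\<Sum>i=1..n. y i) \<le> real T"
    and sx: "(\<Sum>i=1..n. \<Sum>j=1..J. x i j) \<le> real k"
    using feas unfolding ptk_feasible_def by auto
  have c0: "c i = 0" if "i \<notin> {1..n}" for i using supp that by auto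
  have P1: "\<forall>i j. (i \<notin> {1..n} \<or> j \<notin> {1..J}) \<longrightarrow> x i j * (1 + e * c i / y i) = 0"
    using x0 by auto
  have P2: "\<forall>i. i \<notin> {1..n} \<longrightarrow> y i + e * c i = 0" using y0 c0 by auto
  have P3: "0 \<le> x i j * (1 + e * c i / y i) \<and> x i j * (1 + e * c i / y i) \<le> (y i + e * c i) * q i j"
    if i: "i\<in>{1..n}" and j: "j\<in>{1..J}" for i j
  proof (cases "c i = 0")
    case True then show ?thesis using xb i j by auto
  next
    case False
    then have yp: "0 < y i" "y i < 1" and b: "\<bar>e * c i\<bar> \<le> y i" using supp bnd by auto
    have eq: "1 + e * c i / y i = (y i + e * c i) / y i" using yp by (simp add: field_simps)
    have nn: "0 \<le> (y i + e * c i) / y i" using yp b by (simp add: abs_le_iff)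
    have "x i j * ((y i + e * c i) / y i) \<le> (y i * q i j) * ((y i + e * c i) / y i)"
      using xb i j nn by (intro mult_right_mono) auto
    also have "\<dots> = (y i + e * c i) * q i j" using yp by (simp add: field_simps)
    finally have u: "x i j * (1 + e * c i / y i) \<le> (y i + e * c i) * q i j" using eq by simp
    have "0 \<le> x i j * ((y i + e * c i) / y i)" using xb i j nn by (intro mult_nonneg_nonneg) auto
    then show ?thesis using u eq by simp
  qed
  have P4: "0 \<le> y i + e * c i \<and> y i + e * c i \<le> 1" if i: "i\<in>{1..n}" for i
  proof (cases "c i = 0")
    case True then show ?thesis using yb i by auto
  next
    case False
    then have "\<bar>e * c i\<bar> \<le> y i" "\<bar>e * c i\<bar> \<le> 1 - y i" using bnd by auto
    then show ?thesis by (simp add: abs_le_iff)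
  qed
  have P5: "(\<Sum>i=1..n. y i + e * c i) \<le> real T"
    using sumy by (simp add: sum.distrib sum_distrib_left)
  have "(\<Sum>i=1..n. \<Sum>j=1..J. x i j * (1 + e * c i / y i))
        = (\<Sum>i=1..n. (\<Sum>j=1..J. x i j) + e * (c i * (\<Sum>j=1..J. x i j) / y i))"
    by (intro sum.cong refl) (simp add: algebra_simps sum.distrib sum_distrib_left sum_distrib_right sum_divide_distrib)
  also have "\<dots> = (\<Sum>i=1..n. \<Sum>j=1..J. x i j) + e * (\<Sum>i=1..n. c i * (\<Sum>j=1..J. x i j) / y i)"
    by (simp add: sum.distrib sum_distrib_left)
  also have "\<dots> = (\<Sum>i=1..n. \<Sum>j=1..J. x i j)"
    using sumx by simp
  finally have P6: "(\<Sum>i=1..n. \<Sum>j=1..J. x i j * (1 + e * c i / y i)) \<le> real k" using sx by simp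
  show ?thesis unfolding ptk_feasible_def using P1 P2 P3 P4 P5 P6 by blast
qed

lemma half_comb: "(X::real) = (1/2) * (X * (1 + a)) + (1 - 1/2) * (X * (1 + - a))"
  by (simp add: field_simps)

lemma half_comb2: "(Y::real) = (1/2) * (Y + b) + (1 - 1/2) * (Y + - b)"
  by (simp add: field_simps)

lemma no_dir:
  assumes bfs: "ptk_bfs n J T k q x y"
    and supp: "\<forall>i. c i \<noteq> 0 \<longrightarrow> i\<in>{1..n} \<and> 0<y i \<and> y i<1"
    and nz: "c i0 \<noteq> 0"
    and sumx: "(\<Sum>i=1..n. c i * (\<Sum>j=1..J. x i j) / y i) = 0"
    and sumy: "(\<Sum>i=1..n. c i) = 0 \<or> (\<Sum>i=1..n. y i) < real T"
  shows False
proof -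
  have feas: "ptk_feasible n J T k q x y" using bfs unfolding ptk_bfs_def by auto
  have sy: "(\<Sum>i=1..n. y i) \<le> real T" using feas unfolding ptk_feasible_def by auto
  define F where "F = {i\<in>{1..n}. c i \<noteq> 0}"
  have fin: "finite F" unfolding F_def by auto
  have i0F: "i0 \<in> F" using supp nz unfolding F_def by auto
  define d0 where "d0 = Min ((\<lambda>i. min (y i) (1 - y i)) ` F)"
  have d0p: "0 < d0" unfolding d0_def using fin i0F supp F_def
    by (subst Min_gr_iff) auto
  have d0le: "d0 \<le> min (y i) (1 - y i)" if "i \<in> F" for i
    unfolding d0_def using fin that by (intro Min_le) auto
  define sc where "sc = (\<Sum>i=1..n. c i)"
  define d where "d = (if sc = 0 then d0 else min d0 (real T - (\<Sum>i=1..n. y i)))"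
  have dp: "0 < d" unfolding d_def using d0p sumy sc_def by auto
  define M where "M = 1 + (\<Sum>i=1..n. \<bar>c i\<bar>)"
  have Mge: "\<bar>c i\<bar> \<le> M" if "i \<in> {1..n}" for i
  proof -
    have "\<bar>c i\<bar> \<le> (\<Sum>i=1..n. \<bar>c i\<bar>)" using that by (intro member_le_sum) auto
    then show ?thesis unfolding M_def by simp
  qed
  have Mp: "0 < M" unfolding M_def by (simp add: add_pos_nonneg sum_nonneg)
  have scM: "\<bar>sc\<bar> \<le> M" unfolding sc_def M_def
    using sum_abs[of c "{1..n}"] by linarith
  define e where "e = d / M"
  have ep: "0 < e" unfolding e_def using dp Mp by simp
  have eb: "\<bar>e * c i\<bar> \<le> d" if "i \<in> {1..n}" for i
  proof -
    have "\<bar>e * c i\<bar> = d * (\<bar>c i\<bar> / M)" unfolding e_def using dp Mp by (simp add: abs_mult)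
    also have "\<dots> \<le> d * 1" using Mge[OF that] Mp dp by (intro mult_left_mono) auto
    finally show ?thesis by simp
  qed
  have esc: "\<bar>e * sc\<bar> \<le> d"
  proof -
    have "\<bar>e * sc\<bar> = d * (\<bar>sc\<bar> / M)" unfolding e_def using dp Mp by (simp add: abs_mult)
    also have "\<dots> \<le> d * 1" using scM Mp dp by (intro mult_left_mono) auto
    finally show ?thesis by simp
  qed
  have dd0: "d \<le> d0" unfolding d_def by auto
  have bnd: "\<forall>i. c i \<noteq> 0 \<longrightarrow> \<bar>e' * c i\<bar> \<le> y i \<and> \<bar>e' * c i\<bar> \<le> 1 - y i"
    if "\<bar>e'\<bar> = e" for e'
  proof (intro allI impI)
    fix i assume ci: "c i \<noteq> 0"
    then have iF: "i \<in> F" and "i \<in> {1..n}" using supp unfolding F_def by auto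
    then have "\<bar>e' * c i\<bar> \<le> d" using eb that by (simp add: abs_mult)
    then show "\<bar>e' * c i\<bar> \<le> y i \<and> \<bar>e' * c i\<bar> \<le> 1 - y i" using d0le[OF iF] dd0 by auto
  qed
  have sumy': "(\<Sum>i=1..n. y i) + e' * (\<Sum>i=1..n. c i) \<le> real T" if "\<bar>e'\<bar> = e" for e'
  proof (cases "sc = 0")
    case True then show ?thesis using sy sc_def by simp
  next
    case False
    have "\<bar>e' * sc\<bar> \<le> d" using esc that by (simp add: abs_mult)
    moreover have "d \<le> real T - (\<Sum>i=1..n. y i)" unfolding d_def using False by simp
    ultimately show ?thesis unfolding sc_def by (simp add: abs_le_iff)
  qed
  have ae1: "\<bar>e\<bar> = e" and ae2: "\<bar>-e\<bar> = e" using ep by auto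
  have f1: "ptk_feasible n J T k q (\<lambda>i j. x i j * (1 + e * c i / y i)) (\<lambda>i. y i + e * c i)"
    using perturb_feasible[OF feas supp bnd[OF ae1] sumx sumy'[OF ae1]] .
  have f2: "ptk_feasible n J T k q (\<lambda>i j. x i j * (1 + (-e) * c i / y i)) (\<lambda>i. y i + (-e) * c i)"
    using perturb_feasible[OF feas supp bnd[OF ae2] sumx sumy'[OF ae2]] .
  have ne: "((\<lambda>i j. x i j * (1 + e * c i / y i)), (\<lambda>i. y i + e * c i)) \<noteq>
            ((\<lambda>i j. x i j * (1 + (-e) * c i / y i)), (\<lambda>i. y i + (-e) * c i))"
  proof
    assume "((\<lambda>i j. x i j * (1 + e * c i / y i)), (\<lambda>i. y i + e * c i)) =
            ((\<lambda>i j. x i j * (1 + (-e) * c i / y i)), (\<lambda>i. y i + (-e) * c i))"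
    then have "(\<lambda>i. y i + e * c i) = (\<lambda>i. y i + (-e) * c i)" by (rule Pair_inject) 
    then have "y i0 + e * c i0 = y i0 + (-e) * c i0" by (rule fun_cong)
    then show False using ep nz by simp
  qed
  have cx: "\<forall>i j. x i j = (1/2) * (x i j * (1 + e * c i / y i)) + (1 - 1/2) * (x i j * (1 + (-e) * c i / y i))"
  proof (intro allI)
    fix i j
    have h: "(-e) * c i / y i = - (e * c i / y i)" by simp
    show "x i j = (1/2) * (x i j * (1 + e * c i / y i)) + (1 - 1/2) * (x i j * (1 + (-e) * c i / y i))"
      unfolding h by (rule half_comb)
  qed
  have cy: "\<forall>i. y i = (1/2) * (y i + e * c i) + (1 - 1/2) * (y i + (-e) * c i)"
    using half_comb2 by (metis mult_minus_left)
  have "\<exists>x1 y1 x2 y2 (t::real).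
          ptk_feasible n J T k q x1 y1 \<and> ptk_feasible n J T k q x2 y2 \<and>
          (x1, y1) \<noteq> (x2, y2) \<and> 0 < t \<and> t < 1 \<and>
          (\<forall>i j. x i j = t * x1 i j + (1 - t) * x2 i j) \<and>
          (\<forall>i. y i = t * y1 i + (1 - t) * y2 i)"
    apply (rule exI[of _ "\<lambda>i j. x i j * (1 + e * c i / y i)"])
    apply (rule exI[of _ "\<lambda>i. y i + e * c i"])
    apply (rule exI[of _ "\<lambda>i j. x i j * (1 + (-e) * c i / y i)"])
    apply (rule exI[of _ "\<lambda>i. y i + (-e) * c i"])
    apply (rule exI[of _ "1/2::real"])
    apply (intro conjI)
          apply (rule f1)
         apply (rule f2)
        apply (rule ne)
       apply simp
      apply simp
     apply (rule cx)
    apply (rule cy)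
    done
  then show False using bfs unfolding ptk_bfs_def by blast
qed


lemma sum3:
  assumes "finite A" "a \<in> A" "b \<in> A" "d \<in> A" "a \<noteq> b" "b \<noteq> d" "a \<noteq> d"
    and "\<forall>i\<in>A. i \<notin> {a,b,d} \<longrightarrow> f i = 0"
  shows "sum f A = f a + f b + (f d :: real)"
proof -
  have "sum f A = sum f {a,b,d}"
    using assms by (intro sum.mono_neutral_left[symmetric]) auto
  then show ?thesis using assms by simp
qed

lemma sum2:
  assumes "finite A" "a \<in> A" "b \<in> A" "a \<noteq> b"
    and "\<forall>i\<in>A. i \<notin> {a,b} \<longrightarrow> f i = 0"
  shows "sum f A = f a + (f b :: real)"
proof -
  have "sum f A = sum f {a,b}"
    using assms by (intro sum.mono_neutral_left[symmetric]) auto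
  then show ?thesis using assms by simp
qed

theorem lemma4p2:
  fixes n J T k :: nat and r :: "nat \<Rightarrow> real" and q x :: "nat \<Rightarrow> nat \<Rightarrow> real"
    and y :: "nat \<Rightarrow> real"
  assumes "ptk_instance n J T k r q"
    and "ptk_bfs n J T k q x y"
  shows "card {i\<in>{1..n}. 0 < y i \<and> y i < 1} \<le> 2 \<and>
         (\<forall>i1 i2. i1 \<noteq> i2 \<and> {i\<in>{1..n}. 0 < y i \<and> y i < 1} = {i1, i2}
             \<longrightarrow> y i1 + y i2 = 1)"
proof -
  note bfs = assms(2)
  have feas: "ptk_feasible n J T k q x y" using bfs unfolding ptk_bfs_def by auto
  have yb: "\<forall>i\<in>{1..n}. 0 \<le> y i \<and> y i \<le> 1"
    and sy: "(\<Sum>i=1..n. y i) \<le> real T"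
    using feas unfolding ptk_feasible_def by auto
  define F where "F = {i\<in>{1..n}. 0 < y i \<and> y i < 1}"
  define s where "s i = (\<Sum>j=1..J. x i j) / y i" for i
  have finF: "finite F" unfolding F_def by auto
  have part1: "card F \<le> 2"
  proof (rule ccontr)
    assume "\<not> card F \<le> 2"
    then obtain S where "S \<subseteq> F" "card S = 3" using obtain_subset_with_card_n[of 3 F] by auto
    then obtain a b d where abd: "a \<in> F" "b \<in> F" "d \<in> F" "a \<noteq> b" "b \<noteq> d" "a \<noteq> d"
      unfolding card_3_iff by auto
    have Fr: "i \<in> F \<Longrightarrow> i \<in> {1..n} \<and> 0 < y i \<and> y i < 1" for i unfolding F_def by auto
    show False
    proof (cases "s b - s d = 0 \<and> s d - s a = 0")
      case False
      define c where "c i = (if i = a then s b - s d else if i = b then s d - s a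
                              else if i = d then s a - s b else 0)" for i
      have supp: "\<forall>i. c i \<noteq> 0 \<longrightarrow> i\<in>{1..n} \<and> 0<y i \<and> y i<1"
        unfolding c_def using Fr abd by auto
      have nz: "c a \<noteq> 0 \<or> c b \<noteq> 0" unfolding c_def using False abd by auto
      have "(\<Sum>i=1..n. c i * (\<Sum>j=1..J. x i j) / y i)
           = c a * (\<Sum>j=1..J. x a j) / y a + c b * (\<Sum>j=1..J. x b j) / y b + c d * (\<Sum>j=1..J. x d j) / y d"
        using abd Fr by (intro sum3) (auto simp: c_def)
      also have "\<dots> = (s b - s d) * s a + (s d - s a) * s b + (s a - s b) * s d"
        unfolding c_def s_def using abd by simp
      also have "\<dots> = 0" by (simp add: algebra_simps)
      finally have sumx: "(\<Sum>i=1..n. c i * (\<Sum>j=1..J. x i j) / y i) = 0" .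
      have "(\<Sum>i=1..n. c i) = c a + c b + c d"
        using abd Fr by (intro sum3) (auto simp: c_def)
      also have "\<dots> = 0" unfolding c_def using abd by simp
      finally have sumy: "(\<Sum>i=1..n. c i) = 0 \<or> (\<Sum>i=1..n. y i) < real T" by simp
      show False using nz no_dir[OF bfs supp _ sumx sumy] by blast
    next
      case True
      define c where "c i = (if i = a then 1 else if i = b then -1 else (0::real))" for i
      have supp: "\<forall>i. c i \<noteq> 0 \<longrightarrow> i\<in>{1..n} \<and> 0<y i \<and> y i<1"
        unfolding c_def using Fr abd by auto
      have nz: "c a \<noteq> 0" unfolding c_def by simp
      have "(\<Sum>i=1..n. c i * (\<Sum>j=1..J. x i j) / y i)
           = c a * (\<Sum>j=1..J. x a j) / y a + c b * (\<Sum>j=1..J. x b j) / y b"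
        using abd Fr by (intro sum2) (auto simp: c_def)
      also have "\<dots> = s a - s b"
        unfolding c_def s_def using abd by simp
      also have "\<dots> = 0" using True by simp
      finally have sumx: "(\<Sum>i=1..n. c i * (\<Sum>j=1..J. x i j) / y i) = 0" .
      have "(\<Sum>i=1..n. c i) = c a + c b"
        using abd Fr by (intro sum2) (auto simp: c_def)
      also have "\<dots> = 0" unfolding c_def using abd by simp
      finally have sumy: "(\<Sum>i=1..n. c i) = 0 \<or> (\<Sum>i=1..n. y i) < real T" by simp
      show False using nz no_dir[OF bfs supp _ sumx sumy] by blast
    qed
  qed
  have part2: "y i1 + y i2 = 1" if ne: "i1 \<noteq> i2" and Feq: "F = {i1, i2}" for i1 i2
  proof (rule ccontr)
    assume neq: "y i1 + y i2 \<noteq> 1"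
    have Fr: "i \<in> F \<Longrightarrow> i \<in> {1..n} \<and> 0 < y i \<and> y i < 1" for i unfolding F_def by auto
    have i1: "i1 \<in> {1..n}" "0 < y i1" "y i1 < 1" and i2: "i2 \<in> {1..n}" "0 < y i2" "y i2 < 1"
      using Fr Feq by auto
    show False
    proof (cases "(\<Sum>i=1..n. y i) < real T")
      case True
      define c where "c i = (if s i1 = 0 \<and> s i2 = 0 then (if i = i1 then 1 else 0)
                             else (if i = i1 then s i2 else if i = i2 then - s i1 else 0))" for i
      have supp: "\<forall>i. c i \<noteq> 0 \<longrightarrow> i\<in>{1..n} \<and> 0<y i \<and> y i<1"
        unfolding c_def using i1 i2 by auto
      have nz: "c i1 \<noteq> 0 \<or> c i2 \<noteq> 0" unfolding c_def using ne by auto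
      have "(\<Sum>i=1..n. c i * (\<Sum>j=1..J. x i j) / y i)
           = c i1 * (\<Sum>j=1..J. x i1 j) / y i1 + c i2 * (\<Sum>j=1..J. x i2 j) / y i2"
        using i1 i2 ne by (intro sum2) (auto simp: c_def)
      also have "\<dots> = c i1 * s i1 + c i2 * s i2" unfolding s_def by simp
      also have "\<dots> = 0" unfolding c_def using ne by auto
      finally have sumx: "(\<Sum>i=1..n. c i * (\<Sum>j=1..J. x i j) / y i) = 0" .
      have sumy: "(\<Sum>i=1..n. c i) = 0 \<or> (\<Sum>i=1..n. y i) < real T" using True by simp
      show False using nz no_dir[OF bfs supp _ sumx sumy] by blast
    next
      case False
      then have eqT: "(\<Sum>i=1..n. y i) = real T" using sy by simp
      define R where "R = {1..n} - {i1, i2}"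
      have R01: "y i = 0 \<or> y i = 1" if "i \<in> R" for i
      proof -
        have "i \<notin> F" "i \<in> {1..n}" using that Feq unfolding R_def by auto
        then show ?thesis using yb unfolding F_def by force
      qed
      have "(\<Sum>i=1..n. y i) = sum y {i1, i2} + sum y R"
        unfolding R_def using i1 i2 by (subst sum.subset_diff[of "{i1,i2}"]) auto
      also have "sum y {i1, i2} = y i1 + y i2" using ne by simp
      also have "sum y R = sum (\<lambda>i. if y i = 1 then 1 else 0) R"
        using R01 by (intro sum.cong) auto
      also have "\<dots> = real (card {i\<in>R. y i = 1})"
      proof -
        have fR: "finite R" unfolding R_def by auto
        have "{i\<in>R. y i = 1} = R \<inter> {i. y i = 1}" by auto
        then show ?thesis using fR by (simp add: sum.If_cases)
      qed
      finally have "y i1 + y i2 = real T - real (card {i\<in>R. y i = 1})" using eqT by simp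
      then have "y i1 + y i2 = of_int (int T - int (card {i\<in>R. y i = 1}))" by simp
      then obtain z :: int where z: "y i1 + y i2 = of_int z" by blast
      have "0 < z" using z i1 i2 by (smt (verit) of_int_0_less_iff)
      moreover have "z < 2"
      proof -
        have "real_of_int z < real_of_int 2" using z i1 i2 by simp
        then show ?thesis by (simp only: of_int_less_iff)
      qed
      ultimately have "z = 1" by simp
      then show False using z neq by simp
    qed
  qed
  show ?thesis
  proof (intro conjI allI impI)
    show "card {i\<in>{1..n}. 0 < y i \<and> y i < 1} \<le> 2" using part1 unfolding F_def .
  next
    fix i1 i2 assume h: "i1 \<noteq> i2 \<and> {i\<in>{1..n}. 0 < y i \<and> y i < 1} = {i1, i2}"
    then have "F = {i1, i2}" unfolding F_def by simp
    then show "y i1 + y i2 = 1" using part2 h by simp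
  qed
qed

end
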